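(* Let $f_1$ and $f_2$ be polynomials (with rational coefficients in variables including $\alpha_1$ and $\alpha_l$) that are linear in $\alpha_1$, where $\alpha_l\neq\alpha_1$. For a polynomial $f$, let $lc(f)$ denote the leading coefficient of $f$ with respect to $\alpha_l$. Then either (1) $\frac{\partial\, lc(f_1)}{\partial\alpha_1}\, lc(f_2)|_{\alpha_1=0}-\frac{\partial\, lc(f_2)}{\partial\alpha_1}\, lc(f_1)|_{\alpha_1=0}=0$, or (2) $\frac{\partial\, lc(f_1)}{\partial\alpha_1}\, lc(f_2)|_{\alpha_1=0}-\frac{\partial\, lc(f_2)}{\partial\alpha_1}\, lc(f_1)|_{\alpha_1=0}= lc\!\left(\frac{\partial f_1}{\partial\alpha_1}\, f_2|_{\alpha_1=0}-\frac{\partial f_2}{\partial\alpha_1}\, f_1|_{\alpha_1=0}\right)$.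
   Context: A polynomial is linear in a variable $x$ if its degree in $x$ is at most one (it may be constant in $x$). The leading coefficient of a polynomial $f$ with respect to $\alpha_l$ is the coefficient (a polynomial in the remaining variables) of the highest power of $\alpha_l$ occurring in $f$. *)

theory Defs
  imports "HOL-Computational_Algebra.Polynomial"
begin

text \<open>Representation: a polynomial in the variables alpha_l, alpha_1 and further
variables is an element of R[alpha_1][alpha_l], i.e. of type 'a poly poly, where the
outer indeterminate is alpha_l, the inner one is alpha_1, and the coefficient ring 'a
stands for the polynomials (over the rationals) in the remaining variables.\<close>

definition linear_in_a1 :: "'a::idom poly poly \<Rightarrow> bool" where
  "linear_in_a1 f \<longleftrightarrow> (\<forall>i. degree (coeff f i) \<le> 1)"

definition d_a1 :: "'a::idom poly poly \<Rightarrow> 'a poly poly" where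
  "d_a1 f = map_poly pderiv f"

definition at_a1_0 :: "'a::idom poly poly \<Rightarrow> 'a poly poly" where
  "at_a1_0 f = map_poly (\<lambda>c. [:poly c 0:]) f"

definition lc_al :: "'a::idom poly poly \<Rightarrow> 'a poly" where
  "lc_al f = lead_coeff f"

definition at_a1_0' :: "'a::idom poly \<Rightarrow> 'a poly" where
  "at_a1_0' c = [:poly c 0:]"

end

theory Submission
  imports Defs
begin

lemma degree_map_poly_le: "degree (map_poly f p) \<le> degree p"
proof (cases "f (lead_coeff p) = 0 \<and> degree p \<noteq> 0")
  case True thus ?thesis using map_poly_degree_less[of f p] by simp
next
  case False
  note F = this
  show ?thesis
  proof (cases "degree p = 0")
    case True
    then obtain c where "p = [:c:]" by (rule degree_eq_zeroE)
    thus ?thesis using length_strip_while_le[of "(=) 0" "map f (cCons c [])"] by (auto simp add: map_poly_def degree_eq_length_coeffs coeffs_Poly cCons_def split: if_splits)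
  next
    case False
    thus ?thesis using F map_poly_degree_eq[of f p] by fastforce
  qed
qed

lemma coeff_mult_le_sum:
  fixes p q :: "'b::idom poly"
  assumes "degree p \<le> n" "degree q \<le> m"
  shows "coeff (p * q) (n + m) = coeff p n * coeff q m"
proof (cases "degree p = n \<and> degree q = m")
  case True thus ?thesis using coeff_mult_degree_sum[of p q] by auto
next
  case False
  hence "degree p < n \<or> degree q < m" using assms by auto
  moreover have "degree (p*q) \<le> degree p + degree q" by (rule degree_mult_le)
  ultimately have "degree (p*q) < n + m" and "coeff p n * coeff q m = 0"
    using assms by (auto simp: coeff_eq_0)
  thus ?thesis by (simp add: coeff_eq_0)
qed

theorem lemma3p6:
  fixes f1 f2 :: "'a::idom poly poly"
  assumes "linear_in_a1 f1" and "linear_in_a1 f2"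
  shows "pderiv (lc_al f1) * at_a1_0' (lc_al f2) - pderiv (lc_al f2) * at_a1_0' (lc_al f1) = 0
      \<or> pderiv (lc_al f1) * at_a1_0' (lc_al f2) - pderiv (lc_al f2) * at_a1_0' (lc_al f1)
          = lc_al (d_a1 f1 * at_a1_0 f2 - d_a1 f2 * at_a1_0 f1)"
proof -
  define n where "n = degree f1"
  define m where "m = degree f2"
  define L where "L = pderiv (lc_al f1) * at_a1_0' (lc_al f2) - pderiv (lc_al f2) * at_a1_0' (lc_al f1)"
  define g where "g = d_a1 f1 * at_a1_0 f2 - d_a1 f2 * at_a1_0 f1"
  have d1: "degree (d_a1 f1) \<le> n" "degree (d_a1 f2) \<le> m"
    unfolding d_a1_def n_def m_def by (auto intro: degree_map_poly_le)
  have z1: "degree (at_a1_0 f1) \<le> n" "degree (at_a1_0 f2) \<le> m"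
    unfolding at_a1_0_def n_def m_def by (auto intro: degree_map_poly_le)
  have c1: "coeff (d_a1 f1 * at_a1_0 f2) (n+m) = pderiv (lc_al f1) * at_a1_0' (lc_al f2)"
    using coeff_mult_le_sum[OF d1(1) z1(2)]
    by (simp add: d_a1_def at_a1_0_def lc_al_def at_a1_0'_def n_def m_def coeff_map_poly)
  have c2: "coeff (d_a1 f2 * at_a1_0 f1) (m+n) = pderiv (lc_al f2) * at_a1_0' (lc_al f1)"
    using coeff_mult_le_sum[OF d1(2) z1(1)]
    by (simp add: d_a1_def at_a1_0_def lc_al_def at_a1_0'_def n_def m_def coeff_map_poly)
  have cg: "coeff g (n+m) = L" using c1 c2 unfolding g_def L_def by (simp add: add.commute)
  have dg: "degree g \<le> n + m" unfolding g_def
    by (rule degree_diff_le; rule order.trans[OF degree_mult_le]; use d1 z1 in auto)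
  show ?thesis
  proof (cases "L = 0")
    case True thus ?thesis unfolding L_def by simp
  next
    case False
    hence "degree g \<ge> n + m" using cg by (metis le_degree)
    hence "degree g = n + m" using dg by simp
    hence "lc_al g = L" using cg by (simp add: lc_al_def)
    thus ?thesis unfolding L_def g_def by simp
  qed
qed

end
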